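(* Let $t_1, t_2 \in \mathsf{Topo}$, let $f$ be an embedding of $t_1$ inside $t_2$, and let $pkt \in \mathsf{Pkt}$, $pt \in \mathsf{Path}(t_1)$ and $q \in \mathsf{PIFOTree}(t_1)$. Then $\widehat f(\mathsf{push}(q, pkt, pt)) = \mathsf{push}(\widehat f(q), pkt, \widetilde f(pt))$.
   Context: Fix a set $\mathsf{Pkt}$ of packets and a totally ordered set $\mathsf{Rk}$ of ranks (smaller is more favorable). PIFOs: for a set $S$, a PIFO over $S$ is a finite sequence of pairs $(s,r)\in S\times\mathsf{Rk}$ in insertion order; $\mathsf{PIFO}(S)$ is the set of these. $\mathsf{push}_{\mathsf{PIFO}}(p,s,r)$ appends $(s,r)$ to $p$. Topologies: $\mathsf{Topo}$ is the smallest set with $*\in\mathsf{Topo}$ and $\mathsf{Node}(\vec t)\in\mathsf{Topo}$ for $n\in\mathbb{N}$, $\vec t\in\mathsf{Topo}^n$. PIFO trees: $\mathsf{Leaf}(p)\in\mathsf{PIFOTree}( * )$ for $p\in\mathsf{PIFO}(\mathsf{Pkt})$; $\mathsf{Internal}(\vec q,p)\in\mathsf{PIFOTree}(\mathsf{Node}(\vec t))$ whenever $\vec t\in\mathsf{Topo}^n$, $p\in\mathsf{PIFO}(\{1,\dots,n\})$, $\vec q[i]\in\mathsf{PIFOTree}(\vec t[i])$. $\vec q[q'/i]$ replaces the $i$-th entry by $q'$. Paths: $\mathsf{Path}( * )=\mathsf{Rk}$; $\mathsf{Path}(\mathsf{Node}(\vec t))$ consists of $(i,r)::pt$ with $1\le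 i\le n$, $r\in\mathsf{Rk}$, $pt\in\mathsf{Path}(\vec t[i])$. push: $\mathsf{push}(\mathsf{Leaf}(p),pkt,r)=\mathsf{Leaf}(\mathsf{push}_{\mathsf{PIFO}}(p,pkt,r))$; $\mathsf{push}(\mathsf{Internal}(\vec q,p),pkt,(i,r)::pt)=\mathsf{Internal}(\vec q[\mathsf{push}(\vec q[i],pkt,pt)/i],\mathsf{push}_{\mathsf{PIFO}}(p,i,r))$. Addresses: $\mathsf{Addr}(t)\subseteq\mathbb{N}^*$ is the smallest set with $\epsilon\in\mathsf{Addr}(t)$ and $i\cdot\alpha\in\mathsf{Addr}(\mathsf{Node}(\vec t))$ for $1\le i\le n$, $\alpha\in\mathsf{Addr}(\vec t[i])$. Subtrees: $t/\epsilon=t$, $\mathsf{Node}(\vec t)/(i\cdot\alpha)=\vec t[i]/\alpha$. An embedding of $t_1$ in $t_2$ is an injective $f:\mathsf{Addr}(t_1)\to\mathsf{Addr}(t_2)$ with $f(\epsilon)=\epsilon$, $t_2/f(\alpha)=*$ whenever $t_1/\alpha=*$, and $\alpha$ a prefix of $\alpha'$ iff $f(\alpha)$ a prefix of $f(\alpha')$. If $t_1=*$ then $t_2=*$; if $t_1=\mathsf{Node}(\vec t_1)$, the map $f_i$ defined by $f(i\cdot\alpha)=f(i)\cdot f_i(\alpha)$ is an embedding of $t_1/i$ in $t_2/f(i)$, and $f(i)\neq\epsilon$. Lifting $\widehat f:\mathsf{PIFOTree}(t_1)\to\mathsf{PIFOTree}(t_2)$, by recursion on $t_1$: if $t_1=*$,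 $\widehat f(q)=q$. If $t_1=\mathsf{Node}(\vec t_1)$ with $n$ children and $q=\mathsf{Internal}(\vec q,p)$, define for each address $\alpha$ of $t_2$ that is a prefix of some $f(i)$ a tree $\widehat f(q)_\alpha\in\mathsf{PIFOTree}(t_2/\alpha)$, from longer to shorter $\alpha$: if $\alpha=f(i)$, $\widehat f(q)_\alpha=\widehat{f_i}(\vec q[i])$; otherwise $t_2/\alpha$ has some $m$ children and $\widehat f(q)_\alpha=\mathsf{Internal}(\vec q_\alpha,p_\alpha)$, where $\vec q_\alpha[j]=\widehat f(q)_{\alpha\cdot j}$ if $\alpha\cdot j$ is a prefix of some $f(i)$ and otherwise $\vec q_\alpha[j]$ is the tree of topology $t_2/(\alpha\cdot j)$ with all PIFOs empty; and $p_\alpha$ is obtained from $p$ by replacing each entry $(i,r)$ by $(j,r)$ where $\alpha\cdot j$ is a prefix of $f(i)$, deleting entries for which no such $j$ exists, keeping the order. Finally $\widehat f(q)=\widehat f(q)_\epsilon$. Path translation $\widetilde f:\mathsf{Path}(t_1)\to\mathsf{Path}(t_2)$, by recursion on $t_1$: if $t_1=*$, $\widetilde f(r)=r$. If $t_1=\mathsf{Node}(\vec t_1)$ and $pt=(i,r)::pt'$ with $f(i)=j_1j_2\cdots j_k$, then $\widetilde f(pt)=(j_1,r)::(j_2,r)::\cdots::(j_k,r)::\widetilde{f_i}(pt')$. *)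

theory Defs
  imports Main "HOL-Library.Sublist"
begin

text \<open>Topologies: Star is the leaf topology, Node ts has children ts (child i is ts ! (i-1),
  children are numbered from 1 as in the paper).\<close>
datatype topo = Star | Node "topo list"

text \<open>A PIFO over S is a list of (element, rank) pairs in insertion order.\<close>
type_synonym ('s, 'rk) pifo = "('s \<times> 'rk) list"

definition push_pifo :: "('s, 'rk) pifo \<Rightarrow> 's \<Rightarrow> 'rk \<Rightarrow> ('s, 'rk) pifo" where
  "push_pifo p s r = p @ [(s, r)]"

datatype ('pkt, 'rk) ptree =
    Leaf "('pkt, 'rk) pifo"
  | Internal "('pkt, 'rk) ptree list" "(nat, 'rk) pifo"

fun wf_tree :: "topo \<Rightarrow> ('pkt, 'rk) ptree \<Rightarrow> bool" where
  "wf_tree Star (Leaf p) = True"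
| "wf_tree (Node ts) (Internal qs p) =
     (list_all2 wf_tree ts qs
      \<and> (\<forall>(i, r) \<in> set p. 1 \<le> i \<and> i \<le> length ts))"
| "wf_tree _ _ = False"

datatype 'rk path = PLeaf 'rk | PCons nat 'rk "'rk path"

fun wf_path :: "topo \<Rightarrow> 'rk path \<Rightarrow> bool" where
  "wf_path Star (PLeaf r) = True"
| "wf_path (Node ts) (PCons i r pt) = (1 \<le> i \<and> i \<le> length ts \<and> wf_path (ts ! (i - 1)) pt)"
| "wf_path _ _ = False"

fun push :: "('pkt, 'rk) ptree \<Rightarrow> 'pkt \<Rightarrow> 'rk path \<Rightarrow> ('pkt, 'rk) ptree" where
  "push (Leaf p) pkt (PLeaf r) = Leaf (push_pifo p pkt r)"
| "push (Internal qs p) pkt (PCons i r pt) =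
     Internal (qs[i - 1 := push (qs ! (i - 1)) pkt pt]) (push_pifo p i r)"
| "push _ _ _ = undefined"

inductive is_addr :: "topo \<Rightarrow> nat list \<Rightarrow> bool" where
  addr_Nil: "is_addr t []"
| addr_Cons: "1 \<le> i \<Longrightarrow> i \<le> length ts \<Longrightarrow> is_addr (ts ! (i - 1)) \<alpha> \<Longrightarrow> is_addr (Node ts) (i # \<alpha>)"

fun subtree :: "topo \<Rightarrow> nat list \<Rightarrow> topo" where
  "subtree t [] = t"
| "subtree (Node ts) (i # \<alpha>) = subtree (ts ! (i - 1)) \<alpha>"
| "subtree Star (_ # _) = undefined"

definition is_embedding :: "topo \<Rightarrow> topo \<Rightarrow> (nat list \<Rightarrow> nat list) \<Rightarrow> bool" where
  "is_embedding t1 t2 f \<longleftrightarrow>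
     (\<forall>\<alpha>. is_addr t1 \<alpha> \<longrightarrow> is_addr t2 (f \<alpha>))
   \<and> inj_on f {\<alpha>. is_addr t1 \<alpha>}
   \<and> f [] = []
   \<and> (\<forall>\<alpha>. is_addr t1 \<alpha> \<longrightarrow> subtree t1 \<alpha> = Star \<longrightarrow> subtree t2 (f \<alpha>) = Star)
   \<and> (\<forall>\<alpha> \<alpha>'. is_addr t1 \<alpha> \<longrightarrow> is_addr t1 \<alpha>' \<longrightarrow> (prefix \<alpha> \<alpha>' \<longleftrightarrow> prefix (f \<alpha>) (f \<alpha>')))"

text \<open>The induced map f_i with f(i.alpha) = f(i).f_i(alpha).\<close>
definition sub_emb :: "(nat list \<Rightarrow> nat list) \<Rightarrow> nat \<Rightarrow> nat list \<Rightarrow> nat list" where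
  "sub_emb f i \<alpha> = drop (length (f [i])) (f (i # \<alpha>))"

fun empty_tree :: "topo \<Rightarrow> ('pkt, 'rk) ptree" where
  "empty_tree Star = Leaf []"
| "empty_tree (Node ts) = Internal (map empty_tree ts) []"

text \<open>p_alpha: keep entries (i,r) such that some alpha.j is a prefix of f(i), i.e. alpha is a
  strict prefix of f(i), replacing i by that (unique) j = f(i) ! |alpha|.\<close>
definition pifo_at :: "(nat list \<Rightarrow> nat list) \<Rightarrow> nat list \<Rightarrow> (nat, 'rk) pifo \<Rightarrow> (nat, 'rk) pifo" where
  "pifo_at f \<alpha> p = map (\<lambda>(i, r). (f [i] ! length \<alpha>, r)) (filter (\<lambda>(i, r). strict_prefix \<alpha> (f [i])) p)"

lemma size_mem_lt: "x \<in> set xs \<Longrightarrow> size x < Suc (size_list size xs)"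
  by (induction xs) auto

lemma zip_mem_size:
  "(i, ti, qi) \<in> set (zip is (zip ts qs)) \<Longrightarrow> size ti < Suc (size_list size (ts::topo list))"
  by (meson set_zip_leftD set_zip_rightD size_mem_lt)

text \<open>build gs f n p alpha s computes the tree at address alpha (where s = t2/alpha), given
  the already lifted children gs (gs ! (i-1) is the lifting of the i-th child).\<close>
function build :: "('pkt, 'rk) ptree list \<Rightarrow> (nat list \<Rightarrow> nat list) \<Rightarrow> nat \<Rightarrow> (nat, 'rk) pifo
                   \<Rightarrow> nat list \<Rightarrow> topo \<Rightarrow> ('pkt, 'rk) ptree" where
  "build gs f n p \<alpha> s =
     (if \<exists>i\<in>{1..n}. f [i] = \<alpha> then gs ! ((SOME i. i \<in> {1..n} \<and> f [i] = \<alpha>) - 1)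
      else (case s of
              Star \<Rightarrow> undefined
            | Node ss \<Rightarrow> Internal
                (map (\<lambda>(j, sj). if \<exists>i\<in>{1..n}. prefix (\<alpha> @ [j]) (f [i])
                                then build gs f n p (\<alpha> @ [j]) sj else empty_tree sj)
                     (zip [1..<length ss + 1] ss))
                (pifo_at f \<alpha> p)))"
  by pat_completeness auto
termination
  by (relation "measure (\<lambda>(_, _, _, _, _, s). size s)")
     (auto dest!: set_zip_rightD intro: size_mem_lt)

function lift :: "(nat list \<Rightarrow> nat list) \<Rightarrow> topo \<Rightarrow> topo \<Rightarrow> ('pkt, 'rk) ptree \<Rightarrow> ('pkt, 'rk) ptree" where
  "lift f Star t2 q = q"
| "lift f (Node ts) t2 (Leaf p) = undefined"
| "lift f (Node ts) t2 (Internal qs p) =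
     build (map (\<lambda>(i, ti, qi). lift (sub_emb f i) ti (subtree t2 (f [i])) qi)
                (zip [1..<length ts + 1] (zip ts qs)))
           f (length ts) p [] t2"
  by pat_completeness auto
termination
  by (relation "measure (\<lambda>(_, t1, _, _). size t1)")
     (auto dest!: zip_mem_size)

fun tpath :: "(nat list \<Rightarrow> nat list) \<Rightarrow> topo \<Rightarrow> 'rk path \<Rightarrow> 'rk path" where
  "tpath f Star (PLeaf r) = PLeaf r"
| "tpath f (Node ts) (PCons i r pt) =
     foldr (\<lambda>j acc. PCons j r acc) (f [i]) (tpath (sub_emb f i) (ts ! (i - 1)) pt)"
| "tpath _ _ _ = undefined"

end

theory Submission
  imports Defs
begin

declare build.simps[simp del]

lemma is_addr_Cons_iff:
  "is_addr t (i # \<alpha>) \<longleftrightarrow> (\<exists>ts. t = Node ts \<and> 1 \<le> i \<and> i \<le> length ts \<and> is_addr (ts ! (i - 1)) \<alpha>)"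
  by (auto elim: is_addr.cases intro: addr_Cons)

lemma is_addr_append:
  "is_addr t (\<alpha> @ \<beta>) \<longleftrightarrow> is_addr t \<alpha> \<and> is_addr (subtree t \<alpha>) \<beta>"
proof (induction \<alpha> arbitrary: t)
  case Nil then show ?case by (auto intro: addr_Nil)
next
  case (Cons i \<alpha>)
  show ?case by (auto simp: is_addr_Cons_iff Cons.IH)
qed

lemma subtree_append:
  "is_addr t \<alpha> \<Longrightarrow> subtree t (\<alpha> @ \<beta>) = subtree (subtree t \<alpha>) \<beta>"
proof (induction \<alpha> arbitrary: t)
  case Nil then show ?case by simp
next
  case (Cons i \<alpha>)
  then show ?case by (auto simp: is_addr_Cons_iff)
qed

lemma addr_single: "1 \<le> i \<Longrightarrow> i \<le> length ts \<Longrightarrow> is_addr (Node ts) [i]"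
  by (auto intro: addr_Cons addr_Nil)

lemma emb_Cons:
  assumes emb: "is_embedding (Node ts) t2 f" and "is_addr (ts ! (i - 1)) \<alpha>"
    and "1 \<le> i" "i \<le> length ts"
  shows "f (i # \<alpha>) = f [i] @ sub_emb f i \<alpha>"
proof -
  have a1: "is_addr (Node ts) (i # \<alpha>)" using assms by (auto intro: addr_Cons)
  have a2: "is_addr (Node ts) [i]" using assms by (simp add: addr_single)
  have "prefix [i] (i # \<alpha>)" by simp
  then have "prefix (f [i]) (f (i # \<alpha>))" using emb a1 a2 unfolding is_embedding_def by blast
  then obtain d where "f (i # \<alpha>) = f [i] @ d" by (auto simp: prefix_def)
  then show ?thesis by (simp add: sub_emb_def)
qed

lemma emb_single_ne:
  assumes emb: "is_embedding (Node ts) t2 f" and "1 \<le> i" "i \<le> length ts"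
  shows "f [i] \<noteq> []"
proof
  assume h: "f [i] = []"
  have "f [] = []" using emb by (simp add: is_embedding_def)
  moreover have "is_addr (Node ts) [i]" using assms by (simp add: addr_single)
  moreover have "is_addr (Node ts) []" by (rule addr_Nil)
  ultimately have "[i] = []" using emb h unfolding is_embedding_def inj_on_def by (metis mem_Collect_eq)
  then show False by simp
qed

lemma emb_sub:
  assumes emb: "is_embedding (Node ts) t2 f" and i: "1 \<le> i" "i \<le> length ts"
  shows "is_embedding (ts ! (i - 1)) (subtree t2 (f [i])) (sub_emb f i)"
proof -
  let ?g = "sub_emb f i" and ?ti = "ts ! (i - 1)" and ?u = "subtree t2 (f [i])"
  have a2: "is_addr (Node ts) [i]" using i by (simp add: addr_single)
  have t2fi: "is_addr t2 (f [i])" using emb a2 unfolding is_embedding_def by blast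
  have eq: "\<And>\<alpha>. is_addr ?ti \<alpha> \<Longrightarrow> f (i # \<alpha>) = f [i] @ ?g \<alpha>"
    using emb_Cons[OF emb _ i] by blast
  have a1: "\<And>\<alpha>. is_addr ?ti \<alpha> \<Longrightarrow> is_addr (Node ts) (i # \<alpha>)" using i by (auto intro: addr_Cons)
  have A: "\<forall>\<alpha>. is_addr ?ti \<alpha> \<longrightarrow> is_addr ?u (?g \<alpha>)"
  proof (intro allI impI)
    fix \<alpha> assume h: "is_addr ?ti \<alpha>"
    have "is_addr t2 (f (i # \<alpha>))" using emb a1[OF h] unfolding is_embedding_def by blast
    then show "is_addr ?u (?g \<alpha>)" using eq[OF h] is_addr_append by metis
  qed
  have B: "inj_on ?g {\<alpha>. is_addr ?ti \<alpha>}"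
  proof (rule inj_onI)
    fix \<alpha> \<alpha>' assume h: "\<alpha> \<in> {\<alpha>. is_addr ?ti \<alpha>}" "\<alpha>' \<in> {\<alpha>. is_addr ?ti \<alpha>}" "?g \<alpha> = ?g \<alpha>'"
    then have "f (i # \<alpha>) = f (i # \<alpha>')" using eq by simp
    then have "i # \<alpha> = i # \<alpha>'" using emb a1 h(1,2) unfolding is_embedding_def inj_on_def by blast
    then show "\<alpha> = \<alpha>'" by simp
  qed
  have C: "?g [] = []" by (simp add: sub_emb_def)
  have D: "\<forall>\<alpha>. is_addr ?ti \<alpha> \<longrightarrow> subtree ?ti \<alpha> = Star \<longrightarrow> subtree ?u (?g \<alpha>) = Star"
  proof (intro allI impI)
    fix \<alpha> assume h: "is_addr ?ti \<alpha>" "subtree ?ti \<alpha> = Star"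
    have "subtree (Node ts) (i # \<alpha>) = Star" using h by simp
    then have "subtree t2 (f (i # \<alpha>)) = Star" using emb a1[OF h(1)] unfolding is_embedding_def by blast
    then show "subtree ?u (?g \<alpha>) = Star" using eq[OF h(1)] subtree_append[OF t2fi] by simp
  qed
  have E: "\<forall>\<alpha> \<alpha>'. is_addr ?ti \<alpha> \<longrightarrow> is_addr ?ti \<alpha>' \<longrightarrow> (prefix \<alpha> \<alpha>' \<longleftrightarrow> prefix (?g \<alpha>) (?g \<alpha>'))"
  proof (intro allI impI)
    fix \<alpha> \<alpha>' assume h: "is_addr ?ti \<alpha>" "is_addr ?ti \<alpha>'"
    have "prefix \<alpha> \<alpha>' \<longleftrightarrow> prefix (i # \<alpha>) (i # \<alpha>')" by simp
    also have "\<dots> \<longleftrightarrow> prefix (f (i # \<alpha>)) (f (i # \<alpha>'))"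
      using emb a1[OF h(1)] a1[OF h(2)] unfolding is_embedding_def by blast
    also have "\<dots> \<longleftrightarrow> prefix (?g \<alpha>) (?g \<alpha>')" using eq h by simp
    finally show "prefix \<alpha> \<alpha>' \<longleftrightarrow> prefix (?g \<alpha>) (?g \<alpha>')" .
  qed
  show ?thesis unfolding is_embedding_def using A B C D E by blast
qed

lemma build_hit:
  "\<exists>i\<in>{1..n}. f [i] = \<alpha> \<Longrightarrow> build gs f n p \<alpha> s = gs ! ((SOME i. i \<in> {1..n} \<and> f [i] = \<alpha>) - 1)"
  by (subst build.simps) simp

lemma build_node:
  "\<not> (\<exists>i\<in>{1..n}. f [i] = \<alpha>) \<Longrightarrow> s = Node ss \<Longrightarrow> build gs f n p \<alpha> s =
     Internal (map (\<lambda>(j, sj). if \<exists>i\<in>{1..n}. prefix (\<alpha> @ [j]) (f [i])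
                                then build gs f n p (\<alpha> @ [j]) sj else empty_tree sj)
                     (zip [1..<length ss + 1] ss)) (pifo_at f \<alpha> p)"
  by (subst build.simps) simp

lemma build_star:
  "\<not> (\<exists>i\<in>{1..n}. f [i] = \<alpha>) \<Longrightarrow> build gs f n p \<alpha> Star = undefined"
  by (subst build.simps) simp

lemma build_indep:
  "\<not> prefix \<beta> (f [i]) \<Longrightarrow> 1 \<le> i \<Longrightarrow>
   build (gs[i - 1 := x]) f n (p @ [(i, r)]) \<beta> s = build gs f n p \<beta> s"
proof (induction gs f n p \<beta> s rule: build.induct)
  case (1 gs f n p \<alpha> s)
  show ?case
  proof (cases "\<exists>i\<in>{1..n}. f [i] = \<alpha>")
    case True
    define k where "k = (SOME i. i \<in> {1..n} \<and> f [i] = \<alpha>)"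
    from True obtain i0 where "i0 \<in> {1..n} \<and> f [i0] = \<alpha>" by blast
    then have k: "k \<in> {1..n} \<and> f [k] = \<alpha>" unfolding k_def by (rule someI)
    then have "k \<noteq> i" using "1.prems" by auto
    then have "k - 1 \<noteq> i - 1" using k "1.prems" by auto
    moreover have "build (gs[i - 1 := x]) f n (p @ [(i, r)]) \<alpha> s = gs[i - 1 := x] ! (k - 1)"
      unfolding k_def by (rule build_hit[OF True])
    moreover have "build gs f n p \<alpha> s = gs ! (k - 1)"
      unfolding k_def by (rule build_hit[OF True])
    ultimately show ?thesis by simp
  next
    case False
    show ?thesis
    proof (cases s)
      case Star then show ?thesis using False by (simp add: build_star)
    next
      case (Node ss)
      have pf: "pifo_at f \<alpha> (p @ [(i, r)]) = pifo_at f \<alpha> p"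
        using "1.prems" by (auto simp: pifo_at_def dest: prefix_order.less_imp_le)
      have np: "\<And>j. \<not> prefix (\<alpha> @ [j]) (f [i])"
        using "1.prems" by (meson prefix_order.dual_order.trans prefixI)
      show ?thesis
        unfolding build_node[OF False Node] pf
      proof (intro arg_cong2[where f=Internal] map_cong refl)
        fix z assume z: "z \<in> set (zip [1..<length ss + 1] ss)"
        obtain j sj where zj: "z = (j, sj)" by (cases z)
        show "(case z of (j, sj) \<Rightarrow> if \<exists>i\<in>{1..n}. prefix (\<alpha> @ [j]) (f [i])
                                then build (gs[i - 1 := x]) f n (p @ [(i, r)]) (\<alpha> @ [j]) sj else empty_tree sj)
            = (case z of (j, sj) \<Rightarrow> if \<exists>i\<in>{1..n}. prefix (\<alpha> @ [j]) (f [i])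
                                then build gs f n p (\<alpha> @ [j]) sj else empty_tree sj)"
          using "1.IH"[OF False Node z zj[symmetric] _ np "1.prems"(2)] zj by auto
      qed
    qed
  qed
qed


lemma build_push:
  assumes emb: "is_embedding (Node ts) t2 f" and i: "1 \<le> i" "i \<le> length ts"
    and n: "n = length ts" and len: "length gs = n"
  shows "f [i] = \<alpha> @ d \<Longrightarrow>
    build (gs[i - 1 := push (gs ! (i - 1)) pkt X]) f n (p @ [(i, r)]) \<alpha> (subtree t2 \<alpha>)
    = push (build gs f n p \<alpha> (subtree t2 \<alpha>)) pkt (foldr (\<lambda>j acc. PCons j r acc) d X)"
proof (induction d arbitrary: \<alpha>)
  have uniq: "\<And>i'. i' \<in> {1..n} \<Longrightarrow> f [i'] = f [i] \<Longrightarrow> i' = i"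
  proof -
    fix i' assume h: "i' \<in> {1..n}" "f [i'] = f [i]"
    have "is_addr (Node ts) [i']" "is_addr (Node ts) [i]" using h i n by (auto simp: addr_single)
    then have "[i'] = [i]" using h emb unfolding is_embedding_def inj_on_def by (metis mem_Collect_eq)
    then show "i' = i" by simp
  qed
  case Nil
  then have a: "\<alpha> = f [i]" by simp
  have ex: "\<exists>i'\<in>{1..n}. f [i'] = \<alpha>" using a i n by auto
  have some: "(SOME i'. i' \<in> {1..n} \<and> f [i'] = \<alpha>) = i"
    using uniq a i n by (intro some_equality) auto
  show ?case using i n len
    unfolding build_hit[OF ex] some by simp
next
  case (Cons j d)
  have a2: "is_addr (Node ts) [i]" using i by (simp add: addr_single)
  have t2fi: "is_addr t2 (f [i])" using emb a2 unfolding is_embedding_def by blast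
  then have aa: "is_addr t2 \<alpha>" and "is_addr (subtree t2 \<alpha>) (j # d)"
    using Cons.prems is_addr_append by metis+
  then obtain ss where ss: "subtree t2 \<alpha> = Node ss" "1 \<le> j" "j \<le> length ss"
    by (auto simp: is_addr_Cons_iff)
  have nohit: "\<not> (\<exists>i'\<in>{1..n}. f [i'] = \<alpha>)"
  proof
    assume "\<exists>i'\<in>{1..n}. f [i'] = \<alpha>"
    then obtain i' where h: "i' \<in> {1..n}" "f [i'] = \<alpha>" by blast
    have "is_addr (Node ts) [i']" using h n by (auto simp: addr_single)
    moreover have "prefix (f [i']) (f [i])" using h Cons.prems by simp
    ultimately have "prefix [i'] [i]" using emb a2 unfolding is_embedding_def by blast
    then have "i' = i" by simp
    then show False using h Cons.prems by simp
  qed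
  have sub: "subtree t2 (\<alpha> @ [j]) = ss ! (j - 1)"
    using subtree_append[OF aa, of "[j]"] ss by simp
  have IH: "build (gs[i - 1 := push (gs ! (i - 1)) pkt X]) f n (p @ [(i, r)]) (\<alpha> @ [j]) (ss ! (j - 1))
    = push (build gs f n p (\<alpha> @ [j]) (ss ! (j - 1))) pkt (foldr (\<lambda>j acc. PCons j r acc) d X)"
    using Cons.IH[of "\<alpha> @ [j]"] Cons.prems sub by simp
  have pf: "pifo_at f \<alpha> (p @ [(i, r)]) = pifo_at f \<alpha> p @ [(j, r)]"
    using Cons.prems by (simp add: pifo_at_def strict_prefix_def)
  have cond: "\<exists>i'\<in>{1..n}. prefix (\<alpha> @ [j]) (f [i'])" using Cons.prems i n by (intro bexI[of _ i]) auto
  show ?case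
    unfolding ss(1) build_node[OF nohit refl] pf
    apply (simp add: push_pifo_def del: upt_Suc)
    apply (rule nth_equalityI)
     apply simp
    subgoal premises pk for k
    proof (cases "k = j - 1")
      case True
      then show ?thesis using ss(2,3) IH cond Cons.prems i pk
        by (auto simp: nth_list_update simp del: upt_Suc)
    next
      case False
      have np: "\<not> prefix (\<alpha> @ [Suc k]) (f [i])" using Cons.prems False ss(2) by auto
      have kl: "k < length ss" using pk by simp
      have bi: "build (gs[i - 1 := push (gs ! (i - 1)) pkt X]) f n (p @ [(i, r)]) (\<alpha> @ [Suc k]) (ss ! k)
          = build gs f n p (\<alpha> @ [Suc k]) (ss ! k)" using np i(1) by (rule build_indep)
      show ?thesis using ss(2,3) IH cond Cons.prems i False kl bi
        by (auto simp: nth_list_update simp del: upt_Suc)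
    qed
    done
qed

theorem lemma5p10:
  fixes t1 t2 :: topo and f :: "nat list \<Rightarrow> nat list"
    and pkt :: 'pkt and pt :: "'rk::linorder path" and q :: "('pkt, 'rk) ptree"
  assumes "is_embedding t1 t2 f"
    and "wf_path t1 pt"
    and "wf_tree t1 q"
  shows "lift f t1 t2 (push q pkt pt) = push (lift f t1 t2 q) pkt (tpath f t1 pt)"
  using assms
proof (induction t1 arbitrary: t2 f pt q)
  case Star
  then show ?case by (cases pt; cases q) auto
next
  case (Node ts)
  obtain i r pt' where pt: "pt = PCons i r pt'" using Node.prems(2) by (cases pt) auto
  obtain qs p where q: "q = Internal qs p" using Node.prems(3) by (cases q) auto
  have i: "1 \<le> i" "i \<le> length ts" and wp: "wf_path (ts ! (i - 1)) pt'"
    using Node.prems(2) pt by auto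
  have la: "list_all2 wf_tree ts qs" using Node.prems(3) q by simp
  then have lq: "length qs = length ts" by (simp add: list_all2_lengthD)
  have wq: "wf_tree (ts ! (i - 1)) (qs ! (i - 1))" using la i by (simp add: list_all2_nthD)
  have emb': "is_embedding (ts ! (i - 1)) (subtree t2 (f [i])) (sub_emb f i)"
    using emb_sub[OF Node.prems(1) i] .
  have mem: "ts ! (i - 1) \<in> set ts" using i by simp
  define G :: "nat \<times> topo \<times> ('pkt, 'rk) ptree \<Rightarrow> ('pkt, 'rk) ptree" where "G = (\<lambda>(i, ti, qi). lift (sub_emb f i) ti (subtree t2 (f [i])) qi)"
  define X where "X = tpath (sub_emb f i) (ts ! (i - 1)) pt'"
  define gs where "gs = map G (zip [1..<length ts + 1] (zip ts qs))"
  have IH: "lift (sub_emb f i) (ts ! (i - 1)) (subtree t2 (f [i])) (push (qs ! (i - 1)) pkt pt')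
     = push (lift (sub_emb f i) (ts ! (i - 1)) (subtree t2 (f [i])) (qs ! (i - 1))) pkt X"
    unfolding X_def using Node.IH[OF mem emb' wp wq] .
  have lg: "length gs = length ts" using lq by (simp add: gs_def del: upt_Suc)
  have gs': "map G (zip [1..<length ts + 1] (zip ts (qs[i - 1 := push (qs ! (i - 1)) pkt pt'])))
     = gs[i - 1 := push (gs ! (i - 1)) pkt X]"
    apply (rule nth_equalityI)
     apply (cases ts; simp add: gs_def lq del: upt_Suc)
    subgoal for k
      using i lq IH by (cases "k = i - 1") (auto simp: gs_def G_def nth_list_update simp del: upt_Suc)
    done
  have "lift f (Node ts) t2 (push q pkt pt)
     = build (gs[i - 1 := push (gs ! (i - 1)) pkt X]) f (length ts) (p @ [(i, r)]) [] (subtree t2 [])"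
    using gs' by (simp add: pt q push_pifo_def G_def)
  also have "\<dots> = push (build gs f (length ts) p [] (subtree t2 [])) pkt
                (foldr (\<lambda>j acc. PCons j r acc) (f [i]) X)"
    by (rule build_push[OF Node.prems(1) i refl lg]) simp
  also have "\<dots> = push (lift f (Node ts) t2 q) pkt (tpath f (Node ts) pt)"
    by (simp add: pt q gs_def G_def X_def)
  finally show ?case .
qed

end
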